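(* Let $(M^n,c,v^m d\nu)$ be a smooth conformal measure space with characteristic constant $\mu$, $n\ge3$, $m\in\mathbb{R}\setminus\{-n,1-n,2-n\}$. Let $I\in\mathcal{T}$ and fix a scale $g\in c$; let $I$ have top component $\sigma$, middle $\omega$, bottom $\rho$, and let $T$ be the middle component of $\nabla^WI$ (the 2-tensor $T(x,z)=g(\nabla_x\omega+\sigma P^W(x)+\rho x,z)$). Then $$\operatorname{tr}T+mv^{-1}\langle I,\tilde J\rangle=(m+n)\rho+\delta_\phi\omega+\sigma\mathrm{J}^W,$$ where $\delta_\phi\omega=\operatorname{div}_g\omega+mv^{-1}g(\omega,\nabla v)$.
   Context: Conformal setting: $(M^n,c)$ a manifold with a conformal class of Riemannian metrics. $\mathcal{E}[w]$: conformal densities of weight $w$ (functions in a scale). Standard tractor bundle $\mathbb{T}\cong\mathbb{R}\oplus TM\oplus\mathbb{R}$ in a scale, tractor $I$ with top $\sigma$, middle $\omega$, bottom $\rho$; tractor metric $\langle I,K\rangle$ with $\langle I,I\rangle=2\sigma\rho+|\omega|^2$. $X$: top and middle $0$, bottom $1$. Schouten $P$, $\mathrm{J}=\operatorname{tr}P$. $\mathbb{D}v$ ($v\in\mathcal{E}[1]$): top $nv$, middle $n\nabla v$, bottom $-(\Delta v+\mathrm{J}v)$. SCMS: positive $v\in\mathcal{E}[1]$, $m\in\mathbb{R}$, fixed constant $\mu$. In a scale, $\mathrm{Ric}^m_\phi=\mathrm{Ric}-mv^{-1}\nabla^2v$, $R^m_\phi=R-2mv^{-1}\Delta v-m(m-1)v^{-2}|\nabla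 v|^2$, $\mathrm{J}^W=\frac{1}{2(m+n-1)}(R^m_\phi+m\mu v^{-2})$, $P^W=\frac{1}{m+n-2}(\mathrm{Ric}^m_\phi-\mathrm{J}^Wg)$ ($P^W(x)$ the vector dual to $P^W(x,\cdot)$). $J=\frac1n\mathbb{D}v$, $\tilde J=J+\frac{(m+2n-2)(\mu-(m-1)|J|^2)}{2(m+n-1)(m+n-2)\langle X,J\rangle}X$. The $W$-tractor connection $\nabla^W_xI$ has top $x\sigma-g(\omega,x)$, middle $\nabla_x\omega+\sigma P^W(x)+\rho x$, bottom $x\rho-P^W(x,\omega)$. *)

theory Defs
  imports "HOL-Analysis.Analysis"
begin

text \<open>Local coordinate model: the manifold is represented by a coordinate chart,
an open set U in real^'n, with n = CARD('n). A scale g is given by its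
component functions g p i j.\<close>

definition partial :: "'n::finite \<Rightarrow> (real^'n \<Rightarrow> real) \<Rightarrow> real^'n \<Rightarrow> real" where
  "partial i f p = deriv (\<lambda>t. f (p + t *\<^sub>R axis i 1)) 0"

definition smooth_on :: "(real^'n::finite) set \<Rightarrow> (real^'n \<Rightarrow> real) \<Rightarrow> bool" where
  "smooth_on U f \<longleftrightarrow> (\<forall>is. continuous_on U (foldr partial is f) \<and>
     (\<forall>p\<in>U. \<forall>i. (\<lambda>t. foldr partial is f (p + t *\<^sub>R axis i 1)) differentiable (at 0)))"

type_synonym 'n metric = "real^'n \<Rightarrow> 'n \<Rightarrow> 'n \<Rightarrow> real"

definition riem_metric :: "(real^'n::finite) set \<Rightarrow> 'n metric \<Rightarrow> bool" where
  "riem_metric U g \<longleftrightarrow> (\<forall>i j. smooth_on U (\<lambda>q. g q i j)) \<and>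
     (\<forall>p\<in>U. \<forall>i j. g p i j = g p j i) \<and>
     (\<forall>p\<in>U. \<forall>x::real^'n. x \<noteq> 0 \<longrightarrow> (\<Sum>i\<in>UNIV. \<Sum>j\<in>UNIV. g p i j * x$i * x$j) > 0)"

definition ginv :: "'n::finite metric \<Rightarrow> real^'n \<Rightarrow> 'n \<Rightarrow> 'n \<Rightarrow> real" where
  "ginv g p i j = matrix_inv (\<chi> a b. g p a b) $ i $ j"

definition gmetric :: "'n::finite metric \<Rightarrow> real^'n \<Rightarrow> real^'n \<Rightarrow> real^'n \<Rightarrow> real" where
  "gmetric g p x y = (\<Sum>i\<in>UNIV. \<Sum>j\<in>UNIV. g p i j * x$i * y$j)"

definition trace_g :: "'n::finite metric \<Rightarrow> real^'n \<Rightarrow> (real^'n \<Rightarrow> real^'n \<Rightarrow> real) \<Rightarrow> real" where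
  "trace_g g p B = (\<Sum>i\<in>UNIV. \<Sum>j\<in>UNIV. ginv g p i j * B (axis i 1) (axis j 1))"

definition christoffel :: "'n::finite metric \<Rightarrow> real^'n \<Rightarrow> 'n \<Rightarrow> 'n \<Rightarrow> 'n \<Rightarrow> real" where
  "christoffel g p k i j = (1/2) * (\<Sum>l\<in>UNIV. ginv g p k l *
      (partial i (\<lambda>q. g q j l) p + partial j (\<lambda>q. g q i l) p - partial l (\<lambda>q. g q i j) p))"

definition ricci :: "'n::finite metric \<Rightarrow> real^'n \<Rightarrow> 'n \<Rightarrow> 'n \<Rightarrow> real" where
  "ricci g p i j = (\<Sum>k\<in>UNIV. partial k (\<lambda>q. christoffel g q k i j) p)
     - (\<Sum>k\<in>UNIV. partial j (\<lambda>q. christoffel g q k i k) p)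
     + (\<Sum>k\<in>UNIV. \<Sum>l\<in>UNIV. christoffel g p k k l * christoffel g p l i j
                 - christoffel g p k j l * christoffel g p l i k)"

definition scal :: "'n::finite metric \<Rightarrow> real^'n \<Rightarrow> real" where
  "scal g p = (\<Sum>i\<in>UNIV. \<Sum>j\<in>UNIV. ginv g p i j * ricci g p i j)"

definition schoutenJ :: "'n::finite metric \<Rightarrow> real^'n \<Rightarrow> real" where
  "schoutenJ g p = scal g p / (2 * (real CARD('n) - 1))"

definition hess :: "'n::finite metric \<Rightarrow> (real^'n \<Rightarrow> real) \<Rightarrow> real^'n \<Rightarrow> 'n \<Rightarrow> 'n \<Rightarrow> real" where
  "hess g f p i j = partial i (partial j f) p - (\<Sum>k\<in>UNIV. christoffel g p k i j * partial k f p)"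

definition lap :: "'n::finite metric \<Rightarrow> (real^'n \<Rightarrow> real) \<Rightarrow> real^'n \<Rightarrow> real" where
  "lap g f p = (\<Sum>i\<in>UNIV. \<Sum>j\<in>UNIV. ginv g p i j * hess g f p i j)"

definition grad :: "'n::finite metric \<Rightarrow> (real^'n \<Rightarrow> real) \<Rightarrow> real^'n \<Rightarrow> real^'n" where
  "grad g f p = (\<chi> i. \<Sum>j\<in>UNIV. ginv g p i j * partial j f p)"

definition cov_vf :: "'n::finite metric \<Rightarrow> (real^'n \<Rightarrow> real^'n) \<Rightarrow> real^'n \<Rightarrow> 'n \<Rightarrow> real^'n" where
  "cov_vf g w p i = (\<chi> k. partial i (\<lambda>q. w q $ k) p + (\<Sum>j\<in>UNIV. christoffel g p k i j * w p $ j))"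

definition cov_dir :: "'n::finite metric \<Rightarrow> (real^'n \<Rightarrow> real^'n) \<Rightarrow> real^'n \<Rightarrow> real^'n \<Rightarrow> real^'n" where
  "cov_dir g w p x = (\<Sum>i\<in>UNIV. x$i *\<^sub>R cov_vf g w p i)"

definition dir_deriv :: "(real^'n::finite \<Rightarrow> real) \<Rightarrow> real^'n \<Rightarrow> real^'n \<Rightarrow> real" where
  "dir_deriv f p x = (\<Sum>i\<in>UNIV. x$i * partial i f p)"

definition divg :: "'n::finite metric \<Rightarrow> (real^'n \<Rightarrow> real^'n) \<Rightarrow> real^'n \<Rightarrow> real" where
  "divg g w p = (\<Sum>i\<in>UNIV. cov_vf g w p i $ i)"

definition ric_m :: "'n::finite metric \<Rightarrow> real \<Rightarrow> (real^'n \<Rightarrow> real) \<Rightarrow> real^'n \<Rightarrow> 'n \<Rightarrow> 'n \<Rightarrow> real" where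
  "ric_m g m v p i j = ricci g p i j - m / v p * hess g v p i j"

definition scal_m :: "'n::finite metric \<Rightarrow> real \<Rightarrow> (real^'n \<Rightarrow> real) \<Rightarrow> real^'n \<Rightarrow> real" where
  "scal_m g m v p = scal g p - 2 * m / v p * lap g v p
     - m * (m - 1) / (v p)^2 * gmetric g p (grad g v p) (grad g v p)"

definition J_W :: "'n::finite metric \<Rightarrow> real \<Rightarrow> real \<Rightarrow> (real^'n \<Rightarrow> real) \<Rightarrow> real^'n \<Rightarrow> real" where
  "J_W g m \<mu> v p = (scal_m g m v p + m * \<mu> / (v p)^2) / (2 * (m + real CARD('n) - 1))"

definition P_W :: "'n::finite metric \<Rightarrow> real \<Rightarrow> real \<Rightarrow> (real^'n \<Rightarrow> real) \<Rightarrow> real^'n \<Rightarrow> real^'n \<Rightarrow> real^'n \<Rightarrow> real" where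
  "P_W g m \<mu> v p x z = (\<Sum>i\<in>UNIV. \<Sum>j\<in>UNIV. x$i * z$j *
      ((ric_m g m v p i j - J_W g m \<mu> v p * g p i j) / (m + real CARD('n) - 2)))"

definition P_W_vec :: "'n::finite metric \<Rightarrow> real \<Rightarrow> real \<Rightarrow> (real^'n \<Rightarrow> real) \<Rightarrow> real^'n \<Rightarrow> real^'n \<Rightarrow> real^'n" where
  "P_W_vec g m \<mu> v p x = (\<chi> k. \<Sum>l\<in>UNIV. ginv g p k l * P_W g m \<mu> v p x (axis l 1))"

subsection \<open>Tractors in a scale: (top, middle, bottom)\<close>

type_synonym 'n tractor = "real \<times> (real^'n) \<times> real"

definition tractor_metric :: "'n::finite metric \<Rightarrow> real^'n \<Rightarrow> 'n tractor \<Rightarrow> 'n tractor \<Rightarrow> real" where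
  "tractor_metric g p I K = (case I of (\<sigma>, \<omega>, \<rho>) \<Rightarrow> case K of (\<sigma>', \<omega>', \<rho>') \<Rightarrow>
      \<sigma> * \<rho>' + \<rho> * \<sigma>' + gmetric g p \<omega> \<omega>')"

definition tractorX :: "'n::finite tractor" where
  "tractorX = (0, 0, 1)"

definition tractorD :: "'n::finite metric \<Rightarrow> (real^'n \<Rightarrow> real) \<Rightarrow> real^'n \<Rightarrow> 'n tractor" where
  "tractorD g v p = (real CARD('n) * v p, real CARD('n) *\<^sub>R grad g v p,
      - (lap g v p + schoutenJ g p * v p))"

definition tractorJ :: "'n::finite metric \<Rightarrow> (real^'n \<Rightarrow> real) \<Rightarrow> real^'n \<Rightarrow> 'n tractor" where
  "tractorJ g v p = (1 / real CARD('n)) *\<^sub>R tractorD g v p"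

definition tractorJtilde :: "'n::finite metric \<Rightarrow> real \<Rightarrow> real \<Rightarrow> (real^'n \<Rightarrow> real) \<Rightarrow> real^'n \<Rightarrow> 'n tractor" where
  "tractorJtilde g m \<mu> v p = (let n = real CARD('n); J = tractorJ g v p in
     J + ((m + 2*n - 2) * (\<mu> - (m - 1) * tractor_metric g p J J)
          / (2 * (m + n - 1) * (m + n - 2) * tractor_metric g p tractorX J)) *\<^sub>R tractorX)"

definition W_conn :: "'n::finite metric \<Rightarrow> real \<Rightarrow> real \<Rightarrow> (real^'n \<Rightarrow> real) \<Rightarrow>
    (real^'n \<Rightarrow> real) \<Rightarrow> (real^'n \<Rightarrow> real^'n) \<Rightarrow> (real^'n \<Rightarrow> real) \<Rightarrow> real^'n \<Rightarrow> real^'n \<Rightarrow> 'n tractor" where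
  "W_conn g m \<mu> v \<sigma> \<omega> \<rho> p x =
     (dir_deriv \<sigma> p x - gmetric g p (\<omega> p) x,
      cov_dir g \<omega> p x + \<sigma> p *\<^sub>R P_W_vec g m \<mu> v p x + \<rho> p *\<^sub>R x,
      dir_deriv \<rho> p x - P_W g m \<mu> v p x (\<omega> p))"

definition delta_phi :: "'n::finite metric \<Rightarrow> real \<Rightarrow> (real^'n \<Rightarrow> real) \<Rightarrow> (real^'n \<Rightarrow> real^'n) \<Rightarrow> real^'n \<Rightarrow> real" where
  "delta_phi g m v w p = divg g w p + m / v p * gmetric g p (w p) (grad g v p)"

end

theory Submission
  imports Defs
begin

lemma ginv_g:
  fixes g :: "'n::finite metric"
  assumes "riem_metric U g" "p \<in> U"
  shows "(\<Sum>j\<in>UNIV. ginv g p i j * g p j k) = (if i = k then 1 else 0)"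
proof -
  define A where "A = (\<chi> a b. g p a b)"
  have ker: "\<forall>x. A *v x = 0 \<longrightarrow> x = 0"
  proof (intro allI impI)
    fix x assume h: "A *v x = 0"
    have "(\<Sum>i\<in>UNIV. \<Sum>j\<in>UNIV. g p i j * x$i * x$j) = (\<Sum>i\<in>UNIV. x$i * (A *v x)$i)"
      by (simp add: A_def matrix_vector_mult_def sum_distrib_left algebra_simps)
    also have "\<dots> = 0" using h by simp
    finally show "x = 0" using assms unfolding riem_metric_def by force
  qed
  hence "invertible A"
    using invertible_left_inverse matrix_left_invertible_ker by blast
  hence "\<exists>A'. A ** A' = mat 1 \<and> A' ** A = mat 1" unfolding invertible_def by blast
  hence "A ** matrix_inv A = mat 1 \<and> matrix_inv A ** A = mat 1"
    unfolding matrix_inv_def by (rule someI_ex)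
  hence "(matrix_inv A ** A) $ i $ k = mat 1 $ i $ k" by simp
  thus ?thesis
    by (simp add: matrix_matrix_mult_def mat_def ginv_def A_def)
qed

lemma sum_delta_r: "(\<Sum>b\<in>(UNIV::'n::finite set). f b * (if b = j then 1 else (0::real))) = f j"
proof -
  have e: "(\<lambda>b. f b * (if b = j then 1 else (0::real))) = (\<lambda>b. if b = j then f b else 0)" by auto
  show ?thesis unfolding e by simp
qed

lemma sum_delta_r2: "(\<Sum>b\<in>(UNIV::'n::finite set). f b * (if j = b then 1 else (0::real))) = f j"
proof -
  have e: "(\<lambda>b. f b * (if j = b then 1 else (0::real))) = (\<lambda>b. if b = j then f b else 0)" by auto
  show ?thesis unfolding e by simp
qed

lemma sum_axis_r: "(\<Sum>b\<in>UNIV. f b * axis j (1::real) $ b) = f j"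
  by (simp add: axis_def sum_delta_r)

lemma sum_axis_l: "(\<Sum>b\<in>UNIV. axis j (1::real) $ b * f b) = f j"
  by (simp add: axis_def mult.commute sum_delta_r)

lemma double_axis: "(\<Sum>a\<in>UNIV. \<Sum>b\<in>UNIV. axis i (1::real) $ a * axis l 1 $ b * F a b) = F i l"
proof -
  have "\<And>a. (\<Sum>b\<in>UNIV. axis i (1::real) $ a * axis l 1 $ b * F a b) = axis i 1 $ a * F a l"
  proof -
    fix a
    have "(\<Sum>b\<in>UNIV. axis i (1::real) $ a * axis l 1 $ b * F a b) = (\<Sum>b\<in>UNIV. axis l 1 $ b * (axis i 1 $ a * F a b))"
      by (rule sum.cong) auto
    also have "\<dots> = axis i 1 $ a * F a l" by (rule sum_axis_l)
    finally show "?thesis a" by simp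
  qed
  hence "(\<Sum>a\<in>UNIV. \<Sum>b\<in>UNIV. axis i (1::real) $ a * axis l 1 $ b * F a b) = (\<Sum>a\<in>UNIV. axis i 1 $ a * F a l)"
    by simp
  also have "\<dots> = F i l" by (rule sum_axis_l)
  finally show ?thesis .
qed

lemma trace_lemma:
  fixes g :: "'n::finite metric"
  assumes "riem_metric U g" "p \<in> U"
  shows "trace_g g p (\<lambda>x z. gmetric g p (F x) z) = (\<Sum>i\<in>UNIV. F (axis i 1) $ i)"
proof -
  have sym: "\<And>a j. g p a j = g p j a" using assms unfolding riem_metric_def by blast
  have "trace_g g p (\<lambda>x z. gmetric g p (F x) z)
      = (\<Sum>i\<in>UNIV. \<Sum>j\<in>UNIV. ginv g p i j * (\<Sum>a\<in>UNIV. g p a j * F (axis i 1) $ a))"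
    unfolding trace_g_def gmetric_def
    by (simp add: sum_axis_r)
  also have "\<dots> = (\<Sum>i\<in>UNIV. \<Sum>a\<in>UNIV. F (axis i 1) $ a * (\<Sum>j\<in>UNIV. ginv g p i j * g p j a))"
    apply (rule sum.cong[OF refl])
    apply (simp add: sum_distrib_left sum_distrib_right)
    apply (subst sum.swap)
    apply (simp add: sym algebra_simps)
    done
  also have "\<dots> = (\<Sum>i\<in>UNIV. F (axis i 1) $ i)"
    by (simp add: ginv_g[OF assms] sum_delta_r2)
  finally show ?thesis .
qed

lemma alg0:
  fixes A B K N m sc L Q U :: real
  assumes "N \<noteq> 0" "K \<noteq> 0" "A \<noteq> 0" "B \<noteq> 0" and hA: "A = m + N - 1" and hB: "B = m + N - 2" and hK: "K = N - 1"
  shows "((sc - m*L) - (sc - 2*m*L - m*(m-1)*Q + m*U)/(2*A)*N)/B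
    + m * (-(L + sc/(2*K))/N + (m+2*N-2)*(U - (m-1)*(-2*(L + sc/(2*K))/N + Q))/(2*A*B))
    = (sc - 2*m*L - m*(m-1)*Q + m*U)/(2*A)"
  using assms(1-4)
  apply (simp add: field_simps)
  unfolding hA hB hK by algebra

lemma fin:
  fixes v X Y W d s N r m G :: real
  assumes "v \<noteq> 0" "X + m / v * Y = W"
  shows "d + s * X + N * r + m / v * (s * Y + r * v + G) = (m + N) * r + (d + m / v * G) + s * W"
  unfolding assms(2)[symmetric] using assms(1) by (simp add: field_simps)

lemma h3l:
  fixes v N D m K M la Js \<mu> gg :: real
  assumes "v \<noteq> 0" "N \<noteq> 0" "D \<noteq> 0"
  shows "m / v * (-(la + Js * v)/N + K * (\<mu> - M * (2 * v * (-(la + Js * v)/N) + gg)) / (D * v))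
     = m * (-(la / v + Js)/N + K * (\<mu> / v^2 - M * (-2*(la / v + Js)/N + gg / v^2)) / D)"
  using assms by (simp add: field_simps power2_eq_square)

theorem lemma5p13:
  fixes U :: "(real^'n::finite) set" and g :: "'n metric"
    and v \<sigma> \<rho> :: "real^'n \<Rightarrow> real" and \<omega> :: "real^'n \<Rightarrow> real^'n"
    and m \<mu> :: real and p :: "real^'n"
  assumes "CARD('n) \<ge> 3"
    and "open U" and "riem_metric U g"
    and "smooth_on U v" and "\<forall>q\<in>U. v q > 0"
    and "smooth_on U \<sigma>" and "smooth_on U \<rho>" and "\<forall>k. smooth_on U (\<lambda>q. \<omega> q $ k)"
    and "m \<notin> {- real CARD('n), 1 - real CARD('n), 2 - real CARD('n)}"
    and "p \<in> U"
  shows "trace_g g p (\<lambda>x z. gmetric g p (fst (snd (W_conn g m \<mu> v \<sigma> \<omega> \<rho> p x))) z)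
         + m / v p * tractor_metric g p (\<sigma> p, \<omega> p, \<rho> p) (tractorJtilde g m \<mu> v p)
       = (m + real CARD('n)) * \<rho> p + delta_phi g m v \<omega> p + \<sigma> p * J_W g m \<mu> v p"
proof -
  define N where "N = real CARD('n)"
  define sc where "sc = scal g p"
  define la where "la = lap g v p"
  define gg where "gg = gmetric g p (grad g v p) (grad g v p)"
  define Js where "Js = schoutenJ g p"
  define W where "W = J_W g m \<mu> v p"
  define GI where "GI = ginv g p"
  have N3: "N \<ge> 3" using assms(1) unfolding N_def by simp
  have vp: "v p > 0" using assms(5,10) by blast
  have mA: "m + N - 1 \<noteq> 0" and mB: "m + N - 2 \<noteq> 0" using assms(9) unfolding N_def by auto
  have sym: "\<And>a j. g p a j = g p j a" using assms(3,10) unfolding riem_metric_def by blast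
  have W_eq: "W = (sc - 2*m/v p*la - m*(m-1)/(v p)^2*gg + m*\<mu>/(v p)^2) / (2*(m+N-1))"
    unfolding W_def J_W_def scal_m_def sc_def la_def gg_def N_def by simp
  have Js_eq: "Js = sc / (2*(N-1))" unfolding Js_def schoutenJ_def sc_def N_def by simp
  have cov: "\<And>i. cov_dir g \<omega> p (axis i 1) = cov_vf g \<omega> p i"
    unfolding cov_dir_def by (simp add: vec_eq_iff sum_axis_l)
  have PW: "\<And>i l. P_W g m \<mu> v p (axis i 1) (axis l 1) = (ric_m g m v p i l - W * g p i l) / (m + N - 2)"
    unfolding P_W_def W_def N_def
    by (rule double_axis)
  have comp: "\<And>i. fst (snd (W_conn g m \<mu> v \<sigma> \<omega> \<rho> p (axis i 1))) $ i
      = cov_vf g \<omega> p i $ i + \<sigma> p * (\<Sum>l\<in>UNIV. GI i l * ((ric_m g m v p i l - W * g p i l) / (m + N - 2))) + \<rho> p"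
    unfolding W_conn_def by (simp add: cov P_W_vec_def PW GI_def)
  have tr1: "trace_g g p (\<lambda>x z. gmetric g p (fst (snd (W_conn g m \<mu> v \<sigma> \<omega> \<rho> p x))) z)
     = divg g \<omega> p + \<sigma> p * (\<Sum>i\<in>UNIV. \<Sum>l\<in>UNIV. GI i l * ((ric_m g m v p i l - W * g p i l) / (m + N - 2))) + N * \<rho> p"
    unfolding trace_lemma[OF assms(3,10)] comp
    by (simp add: sum.distrib sum_distrib_left divg_def N_def)
  have gsum: "(\<Sum>i\<in>UNIV. \<Sum>l\<in>UNIV. GI i l * g p i l) = N"
  proof -
    have "\<And>i. (\<Sum>l\<in>UNIV. GI i l * g p i l) = 1"
    proof -
      fix i
      have "(\<Sum>l\<in>UNIV. GI i l * g p i l) = (\<Sum>l\<in>UNIV. ginv g p i l * g p l i)"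
        by (rule sum.cong) (simp_all add: GI_def sym[of i])
      also have "\<dots> = 1" using ginv_g[OF assms(3,10), of i i] by simp
      finally show "(\<Sum>l\<in>UNIV. GI i l * g p i l) = 1" .
    qed
    thus ?thesis unfolding N_def by simp
  qed
  have rsum: "(\<Sum>i\<in>UNIV. \<Sum>l\<in>UNIV. GI i l * ric_m g m v p i l) = sc - m / v p * la"
  proof -
    have "(\<Sum>i\<in>UNIV. \<Sum>l\<in>UNIV. GI i l * ric_m g m v p i l)
        = (\<Sum>i\<in>UNIV. \<Sum>l\<in>UNIV. GI i l * ricci g p i l - (m / v p) * (GI i l * hess g v p i l))"
      unfolding ric_m_def by (simp add: right_diff_distrib mult.left_commute)
    also have "\<dots> = (\<Sum>i\<in>UNIV. \<Sum>l\<in>UNIV. GI i l * ricci g p i l) - (m / v p) * (\<Sum>i\<in>UNIV. \<Sum>l\<in>UNIV. GI i l * hess g v p i l)"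
      by (simp only: sum_subtractf sum_distrib_left)
    also have "\<dots> = sc - m / v p * la"
      unfolding sc_def la_def scal_def lap_def GI_def ..
    finally show ?thesis .
  qed
  have tr2: "(\<Sum>i\<in>UNIV. \<Sum>l\<in>UNIV. GI i l * ((ric_m g m v p i l - W * g p i l) / (m + N - 2)))
      = ((sc - m / v p * la) - W * N) / (m + N - 2)"
  proof -
    have "(\<Sum>i\<in>UNIV. \<Sum>l\<in>UNIV. GI i l * ((ric_m g m v p i l - W * g p i l) / (m + N - 2)))
       = ((\<Sum>i\<in>UNIV. \<Sum>l\<in>UNIV. GI i l * ric_m g m v p i l) - W * (\<Sum>i\<in>UNIV. \<Sum>l\<in>UNIV. GI i l * g p i l)) / (m + N - 2)"
      by (simp add: sum_divide_distrib sum_subtractf sum_distrib_left diff_divide_distrib right_diff_distrib algebra_simps)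
    thus ?thesis using gsum rsum by simp
  qed
  have N0: "N \<noteq> 0" using N3 by simp
  have vne: "v p \<noteq> 0" using vp by simp
  have tJ: "tractorJ g v p = (v p, grad g v p, -(la + Js * v p)/N)"
    unfolding tractorJ_def tractorD_def using N0
    by (simp add: N_def la_def Js_def)
  have gm0: "gmetric g p 0 (grad g v p) = 0" unfolding gmetric_def by simp
  have XJ: "tractor_metric g p tractorX (tractorJ g v p) = v p"
    unfolding tJ tractor_metric_def tractorX_def using gm0 by simp
  define JJ where "JJ = 2 * v p * (-(la + Js * v p)/N) + gg"
  have JJe: "tractor_metric g p (tractorJ g v p) (tractorJ g v p) = JJ"
    unfolding tJ tractor_metric_def JJ_def gg_def by simp
  define c where "c = (m + 2*N - 2) * (\<mu> - (m - 1) * JJ) / (2 * (m + N - 1) * (m + N - 2) * v p)"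
  have tJt: "tractorJtilde g m \<mu> v p = (v p, grad g v p, -(la + Js * v p)/N + c)"
    unfolding tractorJtilde_def Let_def XJ JJe
    by (simp add: tJ tractorX_def c_def N_def)
  have IJ: "tractor_metric g p (\<sigma> p, \<omega> p, \<rho> p) (tractorJtilde g m \<mu> v p)
      = \<sigma> p * (-(la + Js * v p)/N + c) + \<rho> p * v p + gmetric g p (\<omega> p) (grad g v p)"
    unfolding tJt tractor_metric_def by simp
  have dp: "delta_phi g m v \<omega> p = divg g \<omega> p + m / v p * gmetric g p (\<omega> p) (grad g v p)"
    unfolding delta_phi_def ..
  have key: "((sc - m / v p * la) - W * N) / (m + N - 2) + m / v p * (-(la + Js * v p)/N + c) = W"
  proof -
    define L where "L = la / v p"
    define Q where "Q = gg / (v p)^2"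
    define UU where "UU = \<mu> / (v p)^2"
    have h1: "sc - m / v p * la = sc - m * L" unfolding L_def by simp
    have h2: "W = (sc - 2*m*L - m*(m-1)*Q + m*UU) / (2*(m+N-1))"
      unfolding W_eq L_def Q_def UU_def by simp
    have h3: "m / v p * (-(la + Js * v p)/N + c)
        = m * (-(L + Js)/N + (m + 2*N - 2) * (UU - (m - 1) * (-2*(L + Js)/N + Q)) / (2 * (m + N - 1) * (m + N - 2)))"
      unfolding c_def JJ_def L_def Q_def UU_def
      by (rule h3l[OF vne N0]) (use mA mB in simp)
    have A: "((sc - m*L) - (sc - 2*m*L - m*(m-1)*Q + m*UU) / (2*(m+N-1)) * N) / (m + N - 2)
        + m * (-(L + sc/(2*(N-1)))/N + (m + 2*N - 2) * (UU - (m - 1) * (-2*(L + sc/(2*(N-1)))/N + Q)) / (2 * (m + N - 1) * (m + N - 2)))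
        = (sc - 2*m*L - m*(m-1)*Q + m*UU) / (2*(m+N-1))"
      by (rule alg0) (use N0 N3 mA mB in auto)
    show ?thesis unfolding h1 h3 h2 unfolding Js_eq by (rule A)
  qed
  have fin2: "divg g \<omega> p + \<sigma> p * (((sc - m / v p * la) - W * N) / (m + N - 2)) + N * \<rho> p
      + m / v p * (\<sigma> p * (-(la + Js * v p)/N + c) + \<rho> p * v p + gmetric g p (\<omega> p) (grad g v p))
      = (m + N) * \<rho> p + (divg g \<omega> p + m / v p * gmetric g p (\<omega> p) (grad g v p)) + \<sigma> p * W"
    by (rule fin[OF vne key])
  show ?thesis
    unfolding tr1 tr2 IJ dp N_def[symmetric] W_def[symmetric]
    by (rule fin2)
qed

end
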